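(* Let $r\in\mathbb{N}$ and suppose $S_N$ admits the Edgeworth expansion of order $r$, i.e. there are polynomials $P_1,\dots,P_r$ with $\mathbb{P}\big(\frac{S_N-NA}{\sqrt N}\leq z\big)-\mathfrak{N}(z)=\sum_{p=1}^rN^{-p/2}P_p(z)\mathfrak{n}(z)+o(N^{-r/2})$ uniformly in $z\in\mathbb{R}$. Then for all $c\in(0,r)$, $$\mathbb{P}\big(S_N\geq AN+\sqrt{c\sigma^2N\ln N}\big)\sim\frac{1}{\sqrt{2\pi c}}\,\frac{1}{\sqrt{N^c\ln N}}\quad\text{as }N\to\infty.$$
   Context: $X_1,X_2,\dots$ are real random variables, $S_N=\sum_{n=1}^N X_n$, $A\in\mathbb{R}$, $\sigma^2>0$, $\mathfrak{n}(y)=\frac{1}{\sqrt{2\pi\sigma^2}}e^{-y^2/(2\sigma^2)}$, $\mathfrak{N}(z)=\int_{-\infty}^z\mathfrak{n}(y)\,dy$. $a_N\sim b_N$ means $a_N/b_N\to1$. *)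

theory Defs
  imports "HOL-Probability.Probability" "HOL-Computational_Algebra.Polynomial"
    "HOL-Library.Landau_Symbols"
begin

definition nfrak :: "real \<Rightarrow> real \<Rightarrow> real" where
  "nfrak \<sigma> y = normal_density 0 \<sigma> y"

definition Nfrak :: "real \<Rightarrow> real \<Rightarrow> real" where
  "Nfrak \<sigma> z = (LBINT y:{..z}. nfrak \<sigma> y)"

definition partial_sum :: "(nat \<Rightarrow> 'a \<Rightarrow> real) \<Rightarrow> nat \<Rightarrow> 'a \<Rightarrow> real" where
  "partial_sum X N x = (\<Sum>n=1..N. X n x)"



end

theory Submission
  imports Defs "HOL-Real_Asymp.Real_Asymp"
begin


lemma nd_deriv: "s > 0 \<Longrightarrow> DERIV (normal_density 0 s) t :> (- t / s\<^sup>2) * normal_density 0 s t"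
  unfolding normal_density_def
  by (auto intro!: derivative_eq_intros simp: field_simps power2_eq_square)

lemma nd_set_integrable: "set_integrable lborel A (normal_density 0 s)" if "A \<in> sets borel" "s > 0"
  unfolding set_integrable_def
  by (rule integrable_mult_indicator[OF _ integrable_normal_density]) (use that in auto)

lemma nd_ind_int: "(A::real set) \<in> sets borel \<Longrightarrow> s > 0 \<Longrightarrow> integrable lborel (\<lambda>x. indicator A x * normal_density 0 s x)"
  using nd_set_integrable[of A s] by (simp add: set_integrable_def)

lemma einterval_z_inf: "einterval (ereal z) \<infinity> = {z<..}"
  by (auto simp: einterval_def)

lemma tail_eq:
  assumes "s > 0"
  shows "1 - Nfrak s z = (LBINT x:{z<..}. nfrak s x)"
proof -
  have "(\<lambda>x. normal_density 0 s x) = (\<lambda>x. indicator {..z} x *\<^sub>R normal_density 0 s x + indicator {z<..} x *\<^sub>R normal_density 0 s x)"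
    by (auto simp: indicator_def fun_eq_iff)
  then have "(\<integral>x. normal_density 0 s x \<partial>lborel) = (\<integral>x. indicator {..z} x *\<^sub>R normal_density 0 s x + indicator {z<..} x *\<^sub>R normal_density 0 s x \<partial>lborel)"
    by (rule arg_cong)
  then have "1 = (\<integral>x. indicator {..z} x *\<^sub>R normal_density 0 s x + indicator {z<..} x *\<^sub>R normal_density 0 s x \<partial>lborel)"
    using assms by simp
  also have "\<dots> = Nfrak s z + (LBINT x:{z<..}. nfrak s x)"
    unfolding Nfrak_def nfrak_def set_lebesgue_integral_def
    by (rule Bochner_Integration.integral_add)
       (use assms in \<open>auto intro!: nd_ind_int\<close>)
  finally show ?thesis by simp
qed

lemma tail_upper:
  assumes "s > 0" "z > 0"
  shows "(LBINT x:{z<..}. nfrak s x) \<le> s\<^sup>2 * nfrak s z / z"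
proof -
  let ?F = "\<lambda>t. - s\<^sup>2 / z * normal_density 0 s t"
  let ?f = "\<lambda>t. t / z * normal_density 0 s t"
  have D: "DERIV ?F t :> ?f t" for t
    using nd_deriv[of s t] assms
    by (auto intro!: derivative_eq_intros simp: field_simps power2_eq_square)
  have lim: "((?F \<circ> real_of_ereal) \<longlongrightarrow> 0) (at_left \<infinity>)"
    unfolding ereal_tendsto_simps normal_density_def using assms by real_asymp
  have c: "isCont ?F z" using D DERIV_isCont by blast
  have lim2: "((?F \<circ> real_of_ereal) \<longlongrightarrow> ?F z) (at_right (ereal z))"
    unfolding ereal_tendsto_simps
    by (rule tendsto_mono[OF at_le[OF subset_UNIV]]) (use c in \<open>simp add: isCont_def\<close>)
  have cn: "isCont (normal_density 0 s) t" for t using DERIV_isCont[OF nd_deriv[OF assms(1)]] .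
  have FTC: "set_integrable lborel (einterval (ereal z) \<infinity>) ?f"
     "(LBINT x=ereal z..\<infinity>. ?f x) = 0 - ?F z"
    by (rule interval_integral_FTC_nonneg[OF _ D _ _ lim2 lim];
        use assms in \<open>auto simp: zero_le_mult_iff intro!: continuous_intros cn\<close>)+
  have pw: "normal_density 0 s x \<le> ?f x" if "x \<in> {z<..}" for x
  proof -
    have "1 \<le> x / z" using that assms by simp
    from mult_right_mono[OF this normal_density_nonneg[of 0 s x]] show ?thesis by simp
  qed
  have "(LBINT x:{z<..}. nfrak s x) \<le> (LBINT x:{z<..}. ?f x)"
    unfolding nfrak_def
    by (rule set_integral_mono[OF _ _ pw])
       (use FTC assms in \<open>auto simp: einterval_z_inf intro!: nd_set_integrable\<close>)
  also have "\<dots> = s\<^sup>2 * nfrak s z / z"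
    using FTC(2) by (simp add: interval_lebesgue_integral_def einterval_z_inf nfrak_def)
  finally show ?thesis .
qed

lemma tail_lower:
  assumes "s > 0" "z \<ge> 2 * s"
  shows "nfrak s z * (s\<^sup>2 / z - s^4 / z^3) \<le> (LBINT x:{z<..}. nfrak s x)"
proof -
  have z0: "z > 0" using assms by simp
  let ?F = "\<lambda>t. - normal_density 0 s t * (s\<^sup>2 / t - s^4 / t^3)"
  let ?f = "\<lambda>t. normal_density 0 s t * (1 - 3 * s^4 / t^4)"
  have D: "DERIV ?F t :> ?f t" if "ereal z < ereal t" "ereal t < \<infinity>" for t
  proof -
    have t0: "t \<noteq> 0" using that z0 by auto
    show ?thesis
      using nd_deriv[of s t] assms t0
      apply -
      apply (rule derivative_eq_intros refl | assumption | simp)+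
      apply (simp add: field_simps power2_eq_square power3_eq_cube power4_eq_xxxx eval_nat_numeral)
      done
  qed
  have lim: "((?F \<circ> real_of_ereal) \<longlongrightarrow> 0) (at_left \<infinity>)"
    unfolding ereal_tendsto_simps normal_density_def using assms by real_asymp
  have c: "isCont ?F z"
    using z0 assms nd_deriv[of s z]
    by (intro continuous_intros DERIV_isCont[OF nd_deriv] ) auto
  have lim2: "((?F \<circ> real_of_ereal) \<longlongrightarrow> ?F z) (at_right (ereal z))"
    unfolding ereal_tendsto_simps
    by (rule tendsto_mono[OF at_le[OF subset_UNIV]]) (use c in \<open>simp add: isCont_def\<close>)
  have cn: "isCont (normal_density 0 s) t" for t using DERIV_isCont[OF nd_deriv[OF assms(1)]] .
  have nn: "0 \<le> ?f t" if "z < t" for t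
  proof -
    have "3 * s^4 \<le> t^4"
    proof -
      have "2 * s \<le> t" using that assms by simp
      then have "(2 * s) ^ 4 \<le> t ^ 4" using assms by (intro power_mono) auto
      then have "16 * s^4 \<le> t^4" by (simp add: power_mult_distrib)
      moreover have "0 \<le> s^4" by simp
      ultimately show ?thesis by linarith
    qed
    then have "3 * s^4 / t^4 \<le> 1" using that z0 by simp
    then show ?thesis by simp
  qed
  have FTC: "set_integrable lborel (einterval (ereal z) \<infinity>) ?f"
     "(LBINT x=ereal z..\<infinity>. ?f x) = 0 - ?F z"
    by (rule interval_integral_FTC_nonneg[OF _ D _ _ lim2 lim];
        use assms z0 nn in \<open>auto intro!: continuous_intros cn\<close>)+
  have pw: "?f x \<le> normal_density 0 s x" if "x \<in> {z<..}" for x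
  proof -
    have "0 \<le> 3 * s^4 / x^4" by simp
    then have "1 - 3 * s^4 / x^4 \<le> 1" by simp
    from mult_left_mono[OF this normal_density_nonneg[of 0 s x]] show ?thesis by simp
  qed
  have "nfrak s z * (s\<^sup>2 / z - s^4 / z^3) = (LBINT x:{z<..}. ?f x)"
    using FTC(2) by (simp add: interval_lebesgue_integral_def einterval_z_inf nfrak_def)
  also have "\<dots> \<le> (LBINT x:{z<..}. nfrak s x)"
    unfolding nfrak_def
    by (rule set_integral_mono[OF _ _ pw])
       (use FTC assms in \<open>auto simp: einterval_z_inf intro!: nd_set_integrable\<close>)
  finally show ?thesis .
qed



lemma nd_le: "s > 0 \<Longrightarrow> normal_density 0 s x \<le> 1 / sqrt (2 * pi * s\<^sup>2)"
  unfolding normal_density_def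
  using mult_left_mono[of "exp (- (x - 0)\<^sup>2 / (2 * s\<^sup>2))" 1 "1 / sqrt (2 * pi * s\<^sup>2)"] by simp


lemma ind_int: "(a::real) \<le> b \<Longrightarrow> integrable lborel (\<lambda>x. indicator {a<..b} x / (C::real))"
proof -
  assume ab: "a \<le> b"
  have "integrable lborel (indicator {a<..b} :: real \<Rightarrow> real)"
    by (rule integrable_real_indicator) (use ab in \<open>auto simp: emeasure_lborel_Ioc\<close>)
  then show ?thesis by (rule integrable_divide_zero)
qed

lemma Nfrak_diff:
  assumes "y \<le> z" "s > 0"
  shows "Nfrak s z - Nfrak s y = (LBINT x:{y<..z}. nfrak s x)"
proof -
  have "(\<lambda>x. indicator {..z} x *\<^sub>R normal_density 0 s x) = (\<lambda>x. indicator {..y} x *\<^sub>R normal_density 0 s x + indicator {y<..z} x *\<^sub>R normal_density 0 s x)"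
    using assms by (auto simp: indicator_def fun_eq_iff)
  then have "Nfrak s z = (\<integral>x. indicator {..y} x *\<^sub>R normal_density 0 s x + indicator {y<..z} x *\<^sub>R normal_density 0 s x \<partial>lborel)"
    unfolding Nfrak_def nfrak_def set_lebesgue_integral_def by (rule arg_cong)
  also have "\<dots> = Nfrak s y + (LBINT x:{y<..z}. nfrak s x)"
    unfolding Nfrak_def nfrak_def set_lebesgue_integral_def
    by (rule Bochner_Integration.integral_add)
       (use assms in \<open>auto intro!: nd_set_integrable[unfolded set_integrable_def] nd_ind_int\<close>)
  finally show ?thesis by simp
qed

lemma Nfrak_lip:
  assumes "s > 0"
  shows "\<bar>Nfrak s z - Nfrak s y\<bar> \<le> \<bar>z - y\<bar> / sqrt (2 * pi * s\<^sup>2)"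
proof -
  have *: "Nfrak s b - Nfrak s a \<le> (b - a) / sqrt (2 * pi * s\<^sup>2)" "0 \<le> Nfrak s b - Nfrak s a" if "a \<le> b" for a b
  proof -
    have "(LBINT x:{a<..b}. nfrak s x) \<le> (LBINT x:{a<..b}. 1 / sqrt (2 * pi * s\<^sup>2))"
      unfolding nfrak_def
      by (rule set_integral_mono)
         (use assms that in \<open>auto intro!: nd_set_integrable nd_le nd_ind_int ind_int simp: set_integrable_def\<close>)
    also have "\<dots> = (b - a) / sqrt (2 * pi * s\<^sup>2)"
      using that by (simp add: set_integral_const)
    finally show "Nfrak s b - Nfrak s a \<le> (b - a) / sqrt (2 * pi * s\<^sup>2)"
      using Nfrak_diff[OF that assms] by simp
    have "0 \<le> (LBINT x:{a<..b}. nfrak s x)"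
      unfolding nfrak_def set_lebesgue_integral_def by (rule Bochner_Integration.integral_nonneg) (auto simp: indicator_def)
    then show "0 \<le> Nfrak s b - Nfrak s a"
      using Nfrak_diff[OF that assms] by simp
  qed
  show ?thesis
  proof (cases "y \<le> z")
    case True then show ?thesis using *[OF True] assms by simp
  next
    case False then have zy: "z \<le> y" by simp
    show ?thesis using *[OF zy] assms zy by (simp add: abs_minus_commute)
  qed
qed

lemma Nfrak_isCont:
  assumes "s > 0"
  shows "isCont (Nfrak s) z"
proof -
  have "((\<lambda>y. Nfrak s y - Nfrak s z) \<longlongrightarrow> 0) (at z)"
  proof (rule Lim_null_comparison[where g="\<lambda>y. \<bar>y - z\<bar> / sqrt (2 * pi * s\<^sup>2)"])
    show "\<forall>\<^sub>F y in at z. norm (Nfrak s y - Nfrak s z) \<le> \<bar>y - z\<bar> / sqrt (2 * pi * s\<^sup>2)"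
      using Nfrak_lip[OF assms] by auto
    show "((\<lambda>y. \<bar>y - z\<bar> / sqrt (2 * pi * s\<^sup>2)) \<longlongrightarrow> 0) (at z)"
      using assms by (auto intro!: tendsto_eq_intros)
  qed
  then show ?thesis unfolding isCont_def by (simp add: LIM_zero_iff)
qed

lemma poly_exp_bound:
  fixes q :: "real poly"
  shows "\<exists>B k. B \<ge> 0 \<and> k \<ge> 0 \<and> (\<forall>w\<ge>0. \<bar>poly q w\<bar> \<le> B * exp (k * w))"
proof (induction q rule: pCons_induct)
  case 0 then show ?case by (intro exI[of _ 0]) auto
next
  case (pCons a p)
  then obtain B k where Bk: "B \<ge> 0" "k \<ge> 0" "\<forall>w\<ge>0. \<bar>poly p w\<bar> \<le> B * exp (k * w)" by blast
  show ?case
  proof (rule exI[where x="\<bar>a\<bar> + B"], rule exI[where x="k + 1"], intro conjI allI impI)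
    fix w :: real assume w: "w \<ge> 0"
    have e1: "1 \<le> exp ((k + 1) * w)" using w Bk by simp
    have "w \<le> exp w" using exp_ge_add_one_self[of w] by linarith
    then have "w * (B * exp (k * w)) \<le> exp w * (B * exp (k * w))"
      using Bk by (intro mult_right_mono) auto
    also have "\<dots> = B * exp ((k + 1) * w)" by (simp add: exp_add[symmetric] algebra_simps)
    finally have w1: "w * (B * exp (k * w)) \<le> B * exp ((k + 1) * w)" .
    have "\<bar>poly (pCons a p) w\<bar> \<le> \<bar>a\<bar> + w * \<bar>poly p w\<bar>"
      using w by (simp add: abs_mult) (metis abs_triangle_ineq abs_mult abs_of_nonneg w)
    also have "\<dots> \<le> \<bar>a\<bar> + w * (B * exp (k * w))"
      using Bk w by (intro add_left_mono mult_left_mono) auto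
    also have "\<dots> \<le> \<bar>a\<bar> * exp ((k + 1) * w) + B * exp ((k + 1) * w)"
      using w1 e1 mult_left_mono[OF e1, of "\<bar>a\<bar>"] by simp
    finally show "\<bar>poly (pCons a p) w\<bar> \<le> (\<bar>a\<bar> + B) * exp ((k + 1) * w)"
      by (simp add: algebra_simps)
  qed (use Bk in auto)
qed

lemma strict_bound:
  fixes f :: "'a \<Rightarrow> real" and h :: "real \<Rightarrow> real"
  assumes M: "prob_space M" and f: "f \<in> borel_measurable M" and h: "isCont h w"
    and b: "\<And>v. \<bar>measure M {x\<in>space M. f x \<le> v} - h v\<bar> \<le> E"
  shows "\<bar>measure M {x\<in>space M. f x < w} - h w\<bar> \<le> E"
proof -
  interpret prob_space M by (rule M)
  have ev: "{x\<in>space M. f x \<le> v} \<in> events" for v using f[unfolded borel_measurable_iff_le] by blast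
  have up: "measure M {x\<in>space M. f x < w} \<le> measure M {x\<in>space M. f x \<le> w}"
    by (rule finite_measure_mono) (auto intro: ev)
  have lo: "h w - E \<le> measure M {x\<in>space M. f x < w}"
  proof (rule tendsto_le[of "at_left w"])
    show "((\<lambda>v. h v - E) \<longlongrightarrow> h w - E) (at_left w)"
      using h by (intro tendsto_intros) (simp add: isCont_def tendsto_mono[OF at_le[OF subset_UNIV]])
    show "((\<lambda>v. measure M {x\<in>space M. f x < w}) \<longlongrightarrow> measure M {x\<in>space M. f x < w}) (at_left w)"
      by simp
    have ev: "eventually (\<lambda>v. v < w) (at_left w)" by (simp add: eventually_at_filter)
    show "\<forall>\<^sub>F v in at_left w. h v - E \<le> measure M {x\<in>space M. f x < w}"
    proof (rule eventually_mono[OF ev])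
      fix v assume "v < w"
      have "measure M {x\<in>space M. f x \<le> v} \<le> measure M {x\<in>space M. f x < w}"
        by (rule finite_measure_mono) (use \<open>v < w\<close> f in \<open>auto intro: ev simp: borel_measurable_iff_less\<close>)
      then show "h v - E \<le> measure M {x\<in>space M. f x < w}" using b[of v] by linarith
    qed
  qed simp
  show ?thesis using up lo b[of w] by linarith
qed



lemma gG_lemma:
  assumes "x \<ge> 2" "c > 0" "s > 0"
  shows "s^2 * nfrak s (sqrt (c * s^2 * ln x)) / sqrt (c * s^2 * ln x)
       = 1 / sqrt (2 * pi * c) * (1 / sqrt (x powr c * ln x))"
proof -
  have L: "ln x > 0" using assms by simp
  have x0: "x > 0" using assms by simp
  have e: "exp (- (sqrt (c * s^2 * ln x) - 0)\<^sup>2 / (2 * s^2)) = inverse (x powr (c/2))"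
  proof -
    have "(sqrt (c * s^2 * ln x) - 0)\<^sup>2 = c * s^2 * ln x" using L assms by simp
    then have "- (sqrt (c * s^2 * ln x) - 0)\<^sup>2 / (2 * s^2) = - (c/2 * ln x)" using assms by (simp add: field_simps)
    then show ?thesis using x0 by (simp add: powr_def exp_minus)
  qed
  have s1: "sqrt (x powr c * ln x) = x powr (c/2) * sqrt (ln x)"
    using x0 L by (simp add: real_sqrt_mult powr_half_sqrt[symmetric] powr_powr)
  have s2: "sqrt (c * s^2 * ln x) = s * sqrt c * sqrt (ln x)"
    using assms by (simp add: real_sqrt_mult)
  have s3: "sqrt (2 * pi * s^2) = sqrt (2 * pi) * s" "sqrt (2 * pi * c) = sqrt (2 * pi) * sqrt c"
    using assms by (simp_all add: real_sqrt_mult)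
  have p: "x powr (c/2) > 0" using x0 by simp
  show ?thesis
    unfolding nfrak_def normal_density_def e s1 s3
    unfolding s2 using assms L p by (simp add: field_simps power2_eq_square)
qed

lemma nfrak_pos: "s > 0 \<Longrightarrow> nfrak s w > 0"
  unfolding nfrak_def by (rule normal_density_pos)

lemma nfrak_isCont: "s > 0 \<Longrightarrow> isCont (nfrak s) w"
  unfolding nfrak_def by (rule DERIV_isCont[OF nd_deriv])

theorem corollary5p3:
  fixes M :: "'a measure" and X :: "nat \<Rightarrow> 'a \<Rightarrow> real"
    and A \<sigma> c :: real and r :: nat and P :: "nat \<Rightarrow> real poly"
  assumes "prob_space M"
    and "\<And>n. X n \<in> borel_measurable M"
    and "\<sigma> > 0"
    and edgeworth: "\<forall>e>0. \<forall>\<^sub>F N in sequentially. \<forall>z::real.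
           \<bar>measure M {x \<in> space M. (partial_sum X N x - real N * A) / sqrt (real N) \<le> z}
            - Nfrak \<sigma> z
            - (\<Sum>p=1..r. real N powr (- real p / 2) * poly (P p) z * nfrak \<sigma> z)\<bar>
           \<le> e * real N powr (- real r / 2)"
    and "0 < c" and "c < real r"
  shows "(\<lambda>N::nat. measure M {x \<in> space M.
            partial_sum X N x \<ge> A * real N + sqrt (c * \<sigma>^2 * real N * ln (real N))})
         \<sim>[at_top] (\<lambda>N. 1 / sqrt (2 * pi * c) * (1 / sqrt (real N powr c * ln (real N))))"
proof -
  interpret prob_space M by fact
  have sig: "\<sigma> > 0" and c0: "c > 0" and cr: "c < real r" by fact+
  have Sm: "partial_sum X N \<in> borel_measurable M" for N
    unfolding partial_sum_def using assms(2) by (intro borel_measurable_sum) auto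
  define T where "T N x = (partial_sum X N x - real N * A) / sqrt (real N)" for N x
  have Tm: "T N \<in> borel_measurable M" for N
    unfolding T_def using Sm[of N] by (intro borel_measurable_divide borel_measurable_diff) auto
  define z where "z N = sqrt (c * \<sigma>^2 * ln (real N))" for N :: nat
  define g where "g N = 1 / sqrt (2 * pi * c) * (1 / sqrt (real N powr c * ln (real N)))" for N :: nat
  define Sg where "Sg N w = (\<Sum>p=1..r. real N powr (- real p / 2) * poly (P p) w * nfrak \<sigma> w)" for N :: nat and w
  define Q where "Q N = measure M {x \<in> space M. partial_sum X N x \<ge> A * real N + sqrt (c * \<sigma>^2 * real N * ln (real N))}" for N :: nat
  define \<delta> where "\<delta> N = measure M {x\<in>space M. T N x < z N} - (Nfrak \<sigma> (z N) + Sg N (z N))" for N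
  define G where "G N = \<sigma>^2 * nfrak \<sigma> (z N) / z N" for N

  have Qeq: "Q N = (1 - Nfrak \<sigma> (z N)) - Sg N (z N) - \<delta> N" if "N \<ge> 2" for N
  proof -
    have Npos: "real N > 0" using that by simp
    have zsq: "sqrt (c * \<sigma>^2 * real N * ln (real N)) = sqrt (real N) * z N"
      unfolding z_def by (simp add: real_sqrt_mult[symmetric] algebra_simps)
    have set: "{x \<in> space M. partial_sum X N x \<ge> A * real N + sqrt (c * \<sigma>^2 * real N * ln (real N))}
       = space M - {x\<in>space M. T N x < z N}"
      using Npos unfolding zsq by (auto simp: T_def pos_divide_less_eq algebra_simps)
    have "Q N = 1 - measure M {x\<in>space M. T N x < z N}"
      unfolding Q_def set
      by (rule prob_compl) (use Tm[of N] in \<open>simp add: borel_measurable_iff_less\<close>)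
    then show ?thesis unfolding \<delta>_def by simp
  qed

  have \<delta>bound: "\<forall>\<^sub>F N in sequentially. \<bar>\<delta> N\<bar> \<le> e * real N powr (- real r / 2)" if e: "e > 0" for e
  proof -
    from edgeworth e have ev: "\<forall>\<^sub>F N in sequentially. \<forall>w::real.
        \<bar>measure M {x \<in> space M. T N x \<le> w} - Nfrak \<sigma> w - Sg N w\<bar> \<le> e * real N powr (- real r / 2)"
      unfolding T_def Sg_def by blast
    then show ?thesis
    proof (rule eventually_mono)
      fix N assume H: "\<forall>w::real. \<bar>measure M {x \<in> space M. T N x \<le> w} - Nfrak \<sigma> w - Sg N w\<bar> \<le> e * real N powr (- real r / 2)"
      have "\<bar>measure M {x\<in>space M. T N x < z N} - (Nfrak \<sigma> (z N) + Sg N (z N))\<bar> \<le> e * real N powr (- real r / 2)"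
      proof (rule strict_bound[OF assms(1) Tm])
        show "isCont (\<lambda>w. Nfrak \<sigma> w + Sg N w) (z N)"
          unfolding Sg_def using sig
          by (intro continuous_intros Nfrak_isCont nfrak_isCont poly_isCont) auto
        show "\<bar>measure M {x\<in>space M. T N x \<le> v} - (Nfrak \<sigma> v + Sg N v)\<bar> \<le> e * real N powr (- real r / 2)" for v
          using H[rule_format, of v] by (simp add: diff_diff_eq)
      qed
      then show "\<bar>\<delta> N\<bar> \<le> e * real N powr (- real r / 2)" unfolding \<delta>_def .
    qed
  qed

  have ev2: "\<forall>\<^sub>F N in sequentially. N \<ge> 2" by (rule eventually_ge_at_top)
  have zlim: "filterlim z at_top sequentially" unfolding z_def using sig c0 by real_asymp
  have gG: "g N = G N" if "N \<ge> 2" for N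
    unfolding g_def G_def z_def using gG_lemma[of "real N" c \<sigma>] that sig c0 by simp
  have zpos: "z N > 0" if "N \<ge> 2" for N
    unfolding z_def using that sig c0 by simp
  have Gpos: "G N > 0" if "N \<ge> 2" for N
    unfolding G_def using zpos[OF that] nfrak_pos[OF sig] sig by simp

  have C1: "((\<lambda>N. (1 - Nfrak \<sigma> (z N)) / G N) \<longlongrightarrow> 1) sequentially"
  proof (rule tendsto_sandwich)
    have evz: "\<forall>\<^sub>F N in sequentially. z N \<ge> 2 * \<sigma>"
      using zlim by (simp add: filterlim_at_top)
    show "\<forall>\<^sub>F N in sequentially. 1 - \<sigma>^2 / (z N)^2 \<le> (1 - Nfrak \<sigma> (z N)) / G N"
      using evz ev2
    proof eventually_elim
      case (elim N)
      have zp: "z N > 0" using elim sig by linarith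
      have "nfrak \<sigma> (z N) * (\<sigma>\<^sup>2 / z N - \<sigma>^4 / z N ^ 3) \<le> 1 - Nfrak \<sigma> (z N)"
        using tail_lower[OF sig elim(1)] tail_eq[OF sig] by simp
      moreover have "nfrak \<sigma> (z N) * (\<sigma>\<^sup>2 / z N - \<sigma>^4 / z N ^ 3) = G N * (1 - \<sigma>^2 / (z N)^2)"
        unfolding G_def using zp by (simp add: field_simps power2_eq_square power3_eq_cube eval_nat_numeral)
      ultimately show ?case using Gpos[OF elim(2)] by (simp add: field_simps)
    qed
    show "\<forall>\<^sub>F N in sequentially. (1 - Nfrak \<sigma> (z N)) / G N \<le> 1"
      using ev2
    proof eventually_elim
      case (elim N)
      have "1 - Nfrak \<sigma> (z N) \<le> G N"
        using tail_upper[OF sig zpos[OF elim]] tail_eq[OF sig] unfolding G_def by simp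
      then show ?case using Gpos[OF elim] by simp
    qed
    show "((\<lambda>N. 1 - \<sigma>^2 / (z N)^2) \<longlongrightarrow> 1) sequentially"
      unfolding z_def using sig c0 by real_asymp
  qed simp

  have C2: "((\<lambda>N. Sg N (z N) / G N) \<longlongrightarrow> 0) sequentially"
  proof -
    have "((\<lambda>N. \<Sum>p=1..r. real N powr (- real p / 2) * poly (P p) (z N) * nfrak \<sigma> (z N) / G N) \<longlongrightarrow> 0) sequentially"
    proof (rule tendsto_null_sum)
      fix p assume p: "p \<in> {1..r}"
      obtain B k where Bk: "B \<ge> 0" "k \<ge> 0" "\<forall>w\<ge>0. \<bar>poly (P p) w\<bar> \<le> B * exp (k * w)"
        using poly_exp_bound[of "P p"] by blast
      show "((\<lambda>N. real N powr (- real p / 2) * poly (P p) (z N) * nfrak \<sigma> (z N) / G N) \<longlongrightarrow> 0) sequentially"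
      proof (rule Lim_null_comparison)
        show "\<forall>\<^sub>F N in sequentially. norm (real N powr (- real p / 2) * poly (P p) (z N) * nfrak \<sigma> (z N) / G N)
                 \<le> B / \<sigma>^2 * (real N powr (- real p / 2) * exp ((k + 1) * z N))"
          using ev2
        proof eventually_elim
          case (elim N)
          have zp: "z N > 0" using zpos[OF elim] .
          have np: "nfrak \<sigma> (z N) > 0" using nfrak_pos[OF sig] .
          have eq: "real N powr (- real p / 2) * poly (P p) (z N) * nfrak \<sigma> (z N) / G N
                  = real N powr (- real p / 2) * poly (P p) (z N) * z N / \<sigma>^2"
            unfolding G_def using zp np sig by (simp add: field_simps)
          have "\<bar>poly (P p) (z N)\<bar> * z N \<le> B * exp (k * z N) * exp (z N)"
          proof (rule mult_mono)
            show "\<bar>poly (P p) (z N)\<bar> \<le> B * exp (k * z N)" using Bk(3) zp by auto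
            show "z N \<le> exp (z N)" using exp_ge_add_one_self[of "z N"] by linarith
          qed (use Bk zp in auto)
          also have "\<dots> = B * exp ((k + 1) * z N)" by (simp add: exp_add[symmetric] algebra_simps)
          finally have b: "\<bar>poly (P p) (z N)\<bar> * z N \<le> B * exp ((k + 1) * z N)" .
          have "norm (real N powr (- real p / 2) * poly (P p) (z N) * z N / \<sigma>^2)
              = real N powr (- real p / 2) * (\<bar>poly (P p) (z N)\<bar> * z N) / \<sigma>^2"
            using zp by (simp add: abs_mult)
          also have "\<dots> \<le> real N powr (- real p / 2) * (B * exp ((k + 1) * z N)) / \<sigma>^2"
            using b sig by (intro divide_right_mono mult_left_mono) auto
          finally show ?case unfolding eq by (simp add: field_simps)
        qed
        have p1: "real p \<ge> 1" using p by simp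
        show "((\<lambda>N. B / \<sigma>^2 * (real N powr (- real p / 2) * exp ((k + 1) * z N))) \<longlongrightarrow> 0) sequentially"
          unfolding z_def using sig c0 Bk p1 by real_asymp
      qed
    qed
    moreover have "Sg N (z N) / G N = (\<Sum>p=1..r. real N powr (- real p / 2) * poly (P p) (z N) * nfrak \<sigma> (z N) / G N)" for N
      unfolding Sg_def by (simp add: sum_divide_distrib)
    ultimately show ?thesis by simp
  qed

  have C3: "((\<lambda>N. \<delta> N / G N) \<longlongrightarrow> 0) sequentially"
  proof -
    have hlim: "((\<lambda>N::nat. real N powr (- real r / 2) / g N) \<longlongrightarrow> 0) sequentially"
      unfolding g_def using c0 cr by real_asymp
    then have evh: "\<forall>\<^sub>F N in sequentially. real N powr (- real r / 2) / g N < 1"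
      by (rule order_tendstoD) simp
    show ?thesis
    proof (rule tendstoI)
      fix \<epsilon> :: real assume \<epsilon>: "\<epsilon> > 0"
      have eb: "\<forall>\<^sub>F N in sequentially. \<bar>\<delta> N\<bar> \<le> \<epsilon>/2 * real N powr (- real r / 2)"
        using \<delta>bound[of "\<epsilon>/2"] \<epsilon> by simp
      show "\<forall>\<^sub>F N in sequentially. dist (\<delta> N / G N) 0 < \<epsilon>"
        using eb evh ev2
      proof eventually_elim
        case (elim N)
        have gp: "g N > 0" using Gpos[OF elim(3)] gG[OF elim(3)] by simp
        have "dist (\<delta> N / G N) 0 = \<bar>\<delta> N\<bar> / g N" using gG[OF elim(3)] gp by simp
        also have "\<dots> \<le> \<epsilon>/2 * real N powr (- real r / 2) / g N"
          using elim(1) gp by (intro divide_right_mono) auto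
        also have "\<dots> = \<epsilon>/2 * (real N powr (- real r / 2) / g N)" by simp
        also have "\<dots> \<le> \<epsilon>/2 * 1"
          using elim(2) \<epsilon> by (intro mult_left_mono) auto
        finally have "dist (\<delta> N / G N) 0 \<le> \<epsilon>/2" by simp
        then show ?case using \<epsilon> by linarith
      qed
    qed
  qed

  have lim: "((\<lambda>N. Q N / g N) \<longlongrightarrow> 1) sequentially"
  proof -
    have "((\<lambda>N. (1 - Nfrak \<sigma> (z N)) / G N - Sg N (z N) / G N - \<delta> N / G N) \<longlongrightarrow> 1 - 0 - 0) sequentially"
      by (intro tendsto_diff C1 C2 C3)
    then have *: "((\<lambda>N. (1 - Nfrak \<sigma> (z N)) / G N - Sg N (z N) / G N - \<delta> N / G N) \<longlongrightarrow> 1) sequentially"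
      by simp
    show ?thesis
    proof (rule Lim_transform_eventually[OF *])
      show "\<forall>\<^sub>F N in sequentially. (1 - Nfrak \<sigma> (z N)) / G N - Sg N (z N) / G N - \<delta> N / G N = Q N / g N"
        using ev2
      proof eventually_elim
        case (elim N)
        show ?case unfolding Qeq[OF elim] gG[OF elim] by (simp add: diff_divide_distrib)
      qed
    qed
  qed
  have "(\<lambda>N. Q N) \<sim>[at_top] (\<lambda>N. g N)"
    by (rule asymp_equivI') (use lim in simp)
  then show ?thesis unfolding Q_def g_def .
qed


end
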